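(* For every integer $h\ge 2$ there exist instances of the atomic model under the proportional-to-squares scheme whose Price of Stability is at least $\frac{h-1}{2}$.
   Context: Atomic model: finitely many players, player $i$ with stake $a_i>0$, $a_i<h$; threshold $h$. Each player opens her own pool or joins one; pools partition the players. A pool $C$ has reward $\rho(C)=1$ if its total stake is at least $h$ (winning) and $0$ otherwise. Proportional-to-squares scheme: player $i$ in pool $C$ receives $\frac{a_i^2}{\sum_{j\in C}a_j^2}\rho(C)$. A partition into winning pools is a Nash equilibrium if no player can strictly increase her payment by moving to another pool or opening a new pool alone. $OPT(G)$ is the maximum number of pools of stake at least $h$ in a partition of the players; $W(\Pi)$ is the number of winning pools of $\Pi$; the Price of Stability is $\min_\Pi OPT(G)/W(\Pi)$ over Nash equilibrium partitions. *)

theory Defs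
  imports Complex_Main "HOL-Library.Disjoint_Sets"
begin

definition stake :: "(nat \<Rightarrow> real) \<Rightarrow> nat set \<Rightarrow> real" where
  "stake a C = (\<Sum>j\<in>C. a j)"

definition winning :: "real \<Rightarrow> (nat \<Rightarrow> real) \<Rightarrow> nat set \<Rightarrow> bool" where
  "winning h a C \<longleftrightarrow> stake a C \<ge> h"

definition reward :: "real \<Rightarrow> (nat \<Rightarrow> real) \<Rightarrow> nat set \<Rightarrow> real" where
  "reward h a C = (if winning h a C then 1 else 0)"

definition pay :: "real \<Rightarrow> (nat \<Rightarrow> real) \<Rightarrow> nat set \<Rightarrow> nat \<Rightarrow> real" where
  "pay h a C i = a i ^ 2 / (\<Sum>j\<in>C. a j ^ 2) * reward h a C"

definition nash_eq :: "nat set \<Rightarrow> (nat \<Rightarrow> real) \<Rightarrow> real \<Rightarrow> nat set set \<Rightarrow> bool" where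
  "nash_eq N a h P \<longleftrightarrow> partition_on N P \<and> (\<forall>C\<in>P. winning h a C) \<and>
     (\<forall>C\<in>P. \<forall>i\<in>C.
        (\<forall>D\<in>P. D \<noteq> C \<longrightarrow> pay h a (insert i D) i \<le> pay h a C i) \<and>
        pay h a {i} i \<le> pay h a C i)"

definition num_winning :: "real \<Rightarrow> (nat \<Rightarrow> real) \<Rightarrow> nat set set \<Rightarrow> nat" where
  "num_winning h a P = card {C\<in>P. winning h a C}"

definition OPT :: "nat set \<Rightarrow> (nat \<Rightarrow> real) \<Rightarrow> real \<Rightarrow> nat" where
  "OPT N a h = Max {num_winning h a P | P. partition_on N P}"

definition price_of_stability :: "nat set \<Rightarrow> (nat \<Rightarrow> real) \<Rightarrow> real \<Rightarrow> real" where
  "price_of_stability N a h =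
     Min {real (OPT N a h) / real (num_winning h a P) | P. nash_eq N a h P}"

definition atomic_instance :: "nat set \<Rightarrow> (nat \<Rightarrow> real) \<Rightarrow> real \<Rightarrow> bool" where
  "atomic_instance N a h \<longleftrightarrow> finite N \<and> (\<forall>i\<in>N. 0 < a i \<and> a i < h)"

end

theory Submission
  imports Defs
begin

lemma ne_unique:
  fixes H m :: nat
  assumes H: "H \<ge> 2" and m: "m = H - 2"
    and N: "N = {0..<m*H+2}"
    and a: "a = (\<lambda>i::nat. if i = 0 then real H - 1 else 1)"
    and ne: "nash_eq N a (real H) P"
  shows "P = {N}"
proof -
  have part: "partition_on N P" and win: "\<And>C. C \<in> P \<Longrightarrow> winning (real H) a C"
    and cond: "\<And>C i D. C \<in> P \<Longrightarrow> i \<in> C \<Longrightarrow> D \<in> P \<Longrightarrow> D \<noteq> C \<Longrightarrow> pay (real H) a (insert i D) i \<le> pay (real H) a C i"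
    using ne unfolding nash_eq_def by blast+
  have sq: "(real H - 1)^2 = real (m*H) + 1"
  proof -
    have "real H = real m + 2" using H m by auto
    then show ?thesis by (simp add: power2_eq_square algebra_simps)
  qed
  have "0 \<in> N" using N by auto
  then obtain C where C: "C \<in> P" "0 \<in> C" using partition_onD1[OF part] by blast
  have CN: "C \<subseteq> N" using C part partition_onD1 by blast
  have finN: "finite N" using N by simp
  have all: "D = C" if D: "D \<in> P" for D
  proof (rule ccontr)
    assume DC: "D \<noteq> C"
    have DN: "D \<subseteq> N" using D part partition_onD1 by blast
    have dj: "C \<inter> D = {}" using part D C DC unfolding partition_on_def disjoint_def by blast
    have "C \<noteq> {0}"
    proof
      assume "C = {0}"
      then have "stake a C = real H - 1" using a by (simp add: stake_def)
      then show False using win[OF C(1)] by (simp add: winning_def)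
    qed
    then obtain i where i: "i \<in> C" "i \<noteq> 0" using C(2) by blast
    have finC: "finite C" using CN finN finite_subset by blast
    have finD: "finite D" using DN finN finite_subset by blast
    have "(\<Sum>j\<in>{0,i}. a j ^ 2) \<le> (\<Sum>j\<in>C. a j ^ 2)"
      by (rule sum_mono2) (use finC C i in auto)
    then have SC: "(\<Sum>j\<in>C. a j ^ 2) \<ge> real (m*H) + 2" using i a sq by simp
    have payC: "pay (real H) a C i = 1 / (\<Sum>j\<in>C. a j ^ 2)"
      using win[OF C(1)] i a by (simp add: pay_def reward_def)
    have iD: "i \<notin> D" "0 \<notin> D" using dj i C by auto
    have aD: "\<And>j. j \<in> insert i D \<Longrightarrow> a j = 1" using iD i a by auto
    have sumD: "(\<Sum>j\<in>insert i D. a j ^ 2) = real (card D) + 1"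
      using aD finD iD by simp
    have "stake a D \<le> stake a (insert i D)"
      using finD iD a i by (simp add: stake_def)
    then have wD: "winning (real H) a (insert i D)"
      using win[OF D] by (simp add: winning_def)
    have payD: "pay (real H) a (insert i D) i = 1 / (real (card D) + 1)"
      using wD sumD i a by (simp add: pay_def reward_def)
    have "D \<subseteq> N - {0, i}" using DN iD by auto
    then have "card D \<le> card (N - {0,i})" using finN by (intro card_mono) auto
    also have "\<dots> = card N - 2" using finN i CN \<open>0 \<in> N\<close> by (simp add: card_Diff_subset) (use i CN in auto)
    finally have cD: "card D \<le> m*H" using N by simp
    have "1 / (real (card D) + 1) \<le> 1 / (\<Sum>j\<in>C. a j ^ 2)"
      using cond[OF C(1) i(1) D DC] payC payD by simp
    then have "(\<Sum>j\<in>C. a j ^ 2) \<le> real (card D) + 1"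
      using SC by (simp add: divide_simps split: if_splits)
    then show False using SC cD by (smt (verit) of_nat_le_iff)
  qed
  then have "P = {C}" using C by blast
  then show ?thesis using partition_onD1[OF part] by simp
qed


lemma div_eq_iff':
  fixes H y j :: nat
  assumes "0 < H"
  shows "(y div H = j) = (j*H \<le> y \<and> y < j*H + H)"
proof
  assume h: "y div H = j"
  have e: "y = j * H + y mod H" using h by (metis div_mult_mod_eq)
  have "y mod H < H" using assms by simp
  with e show "j*H \<le> y \<and> y < j*H + H" by linarith
next
  assume "j*H \<le> y \<and> y < j*H + H"
  then show "y div H = j" by (intro div_nat_eqI) (auto simp: mult.commute)
qed

lemma opt_part:
  fixes H m :: nat
  assumes H: "H \<ge> 2" and m: "m = H - 2"
    and N: "N = {0..<m*H+2}"
    and a: "a = (\<lambda>i::nat. if i = 0 then real H - 1 else 1)"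
  shows "\<exists>P. partition_on N P \<and> num_winning (real H) a P = m + 1"
proof -
  define f where "f = (\<lambda>i::nat. if i < 2 then 0 else (i-2) div H + 1)"
  define B where "B = (\<lambda>k. {i\<in>N. f i = k})"
  define P where "P = B ` {..m}"
  have H0: "H > 0" using H by simp
  have B0: "B 0 = {0,1}" unfolding B_def f_def N by auto
  have Bk: "B k = {(k-1)*H+2 ..< k*H+2}" if k: "1 \<le> k" "k \<le> m" for k
  proof -
    obtain j where j: "k = Suc j" using k by (cases k) auto
    have "j*H + H \<le> m*H" using j k by (metis Suc_le_eq add.commute mult_Suc mult_le_mono1 less_eq_Suc_le)
    have "x \<in> B (Suc j) \<longleftrightarrow> x \<in> {j*H+2 ..< j*H+H+2}" for x
    proof -
      have "x \<in> B (Suc j) \<longleftrightarrow> x < m*H+2 \<and> 2 \<le> x \<and> (x-2) div H = j"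
        unfolding B_def f_def N by auto
      also have "\<dots> \<longleftrightarrow> x < m*H+2 \<and> 2 \<le> x \<and> j*H \<le> x-2 \<and> x-2 < j*H+H"
        using div_eq_iff'[OF H0, of "x-2" j] by blast
      also have "\<dots> \<longleftrightarrow> x \<in> {j*H+2 ..< j*H+H+2}"
        using \<open>j*H + H \<le> m*H\<close> by auto
      finally show ?thesis .
    qed
    then have "B (Suc j) = {j*H+2 ..< j*H+H+2}" by (rule set_eqI)
    moreover have "(k-1)*H+2 = j*H+2" "k*H+2 = j*H+H+2" using j by simp_all
    ultimately show ?thesis using j by (simp add: add.commute)
  qed
  have wB: "winning (real H) a (B k)" if "k \<le> m" for k
  proof (cases "k = 0")
    case True then show ?thesis using a by (simp add: B0 winning_def stake_def)
  next
    case False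
    then have "B k = {(k-1)*H+2 ..< k*H+2}" using Bk that by simp
    moreover have "\<And>i. i \<in> {(k-1)*H+2 ..< k*H+2} \<Longrightarrow> a i = 1" using a by auto
    moreover have "card {(k-1)*H+2 ..< k*H+2} = H" using False
      by (cases k) auto
    ultimately show ?thesis by (simp add: winning_def stake_def)
  qed
  define w where "w = (\<lambda>k. if k = 0 then 0 else (k-1)*H+2)"
  have wmem: "w k \<in> B k" if "k \<le> m" for k
  proof (cases "k = 0")
    case True then show ?thesis by (simp add: w_def B0)
  next
    case False then show ?thesis using Bk[of k] that H0 by (simp add: w_def)
  qed
  have fB: "f i = k" if "i \<in> B k" for i k using that B_def by auto
  have inj: "inj_on B {..m}"
    by (rule inj_onI) (metis atMost_iff fB wmem)
  have part: "partition_on N P"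
  proof (rule partition_onI)
    show "\<Union>P = N"
    proof
      show "\<Union>P \<subseteq> N" unfolding P_def B_def by auto
      show "N \<subseteq> \<Union>P"
      proof
        fix i assume i: "i \<in> N"
        have "f i \<le> m"
        proof (cases "i < 2")
          case False
          then have "i - 2 < m * H" using i N by auto
          then have "(i-2) div H < m" using H0 by (simp add: div_less_iff_less_mult)
          then show ?thesis using False f_def by simp
        qed (simp add: f_def)
        then show "i \<in> \<Union>P" unfolding P_def B_def using i by auto
      qed
    qed
    show "disjnt p q" if "p \<in> P" "q \<in> P" "p \<noteq> q" for p q
      using that unfolding P_def disjnt_def B_def by auto
    show "{} \<notin> P" unfolding P_def using wmem by auto
  qed
  have "{C\<in>P. winning (real H) a C} = P" unfolding P_def using wB by auto
  then have "num_winning (real H) a P = card P" by (simp add: num_winning_def)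
  also have "\<dots> = m + 1" unfolding P_def using inj by (simp add: card_image)
  finally show ?thesis using part by blast
qed


lemma main_nat:
  fixes H :: nat
  assumes H: "H \<ge> 2"
  shows "\<exists>N a. atomic_instance N a (real H) \<and>
           (\<exists>P. nash_eq N a (real H) P) \<and>
           price_of_stability N a (real H) \<ge> (real H - 1) / 2"
proof -
  define m where "m = H - 2"
  define N where "N = {0::nat..<m*H+2}"
  define a where "a = (\<lambda>i::nat. if i = 0 then real H - 1 else 1)"
  have finN: "finite N" unfolding N_def by simp
  have ai: "atomic_instance N a (real H)"
    unfolding atomic_instance_def a_def using finN H by auto
  have posa: "\<And>i. a i > 0" unfolding a_def using H by auto
  have Nne: "N \<noteq> {}" unfolding N_def by auto
  have wN: "winning (real H) a N"
  proof -
    have "{0,1} \<subseteq> N" unfolding N_def by auto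
    then have "(\<Sum>j\<in>{0,1}. a j) \<le> (\<Sum>j\<in>N. a j)"
      by (intro sum_mono2) (use finN posa less_imp_le in auto)
    then show ?thesis unfolding winning_def stake_def a_def by simp
  qed
  have pay0: "pay (real H) a {i} i \<le> pay (real H) a N i" if i: "i \<in> N" for i
  proof -
    have "\<not> winning (real H) a {i}" using ai i
      unfolding atomic_instance_def winning_def stake_def by auto
    then have "pay (real H) a {i} i = 0" by (simp add: pay_def reward_def)
    moreover have "pay (real H) a N i \<ge> 0" unfolding pay_def reward_def
      by (simp add: sum_nonneg)
    ultimately show ?thesis by simp
  qed
  have neN: "nash_eq N a (real H) {N}"
    unfolding nash_eq_def using partition_on_space[OF Nne] wN pay0 by auto
  have allNE: "P = {N}" if "nash_eq N a (real H) P" for P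
    using ne_unique[OF H m_def N_def a_def that] .
  have nw1: "num_winning (real H) a {N} = 1"
  proof -
    have "{C\<in>{N}. winning (real H) a C} = {N}" using wN by auto
    then show ?thesis by (simp add: num_winning_def)
  qed
  obtain P0 where P0: "partition_on N P0" "num_winning (real H) a P0 = m + 1"
    using opt_part[OF H m_def N_def a_def] by blast
  have fin: "finite {num_winning (real H) a P | P. partition_on N P}"
  proof -
    have "{P. partition_on N P} \<subseteq> Pow (Pow N)"
      by (auto simp: partition_on_def)
    then have "finite {P. partition_on N P}" using finN by (meson finite_Pow_iff finite_subset)
    then show ?thesis by simp
  qed
  have opt: "OPT N a (real H) \<ge> m + 1"
    unfolding OPT_def using P0 fin by (intro Max_ge) (auto intro!: exI[of _ P0])
  have set: "{real (OPT N a (real H)) / real (num_winning (real H) a P) | P. nash_eq N a (real H) P}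
      = {real (OPT N a (real H))}"
  proof (rule set_eqI, rule iffI)
    fix y assume "y \<in> {real (OPT N a (real H)) / real (num_winning (real H) a P) | P. nash_eq N a (real H) P}"
    then obtain P where y: "y = real (OPT N a (real H)) / real (num_winning (real H) a P)"
      and P: "nash_eq N a (real H) P" by blast
    from allNE[OF P] y nw1 show "y \<in> {real (OPT N a (real H))}" by simp
  next
    fix y assume "y \<in> {real (OPT N a (real H))}"
    then have "y = real (OPT N a (real H)) / real (num_winning (real H) a {N})" using nw1 by simp
    then show "y \<in> {real (OPT N a (real H)) / real (num_winning (real H) a P) | P. nash_eq N a (real H) P}"
      using neN by blast
  qed
  have pe: "price_of_stability N a (real H) = real (OPT N a (real H))"
    by (simp only: price_of_stability_def set Min_singleton)
  have o1: "real H - 1 \<le> real (OPT N a (real H))"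
  proof -
    have "real (m + 1) \<le> real (OPT N a (real H))" using opt by (simp only: of_nat_le_iff)
    moreover have "real (m + 1) = real H - 1" using H m_def by simp
    ultimately show ?thesis by linarith
  qed
  have H2: "real H \<ge> 2" using H by simp
  have "(real H - 1) / 2 \<le> real H - 1" using H2 by simp
  also have "\<dots> \<le> real (OPT N a (real H))" by (rule o1)
  also have "\<dots> = price_of_stability N a (real H)" by (rule pe[symmetric])
  finally have "(real H - 1) / 2 \<le> price_of_stability N a (real H)" .
  then show ?thesis using ai neN by blast
qed

theorem theorem6p1:
  fixes h :: int
  assumes "h \<ge> 2"
  shows "\<exists>N a. atomic_instance N a (real_of_int h) \<and>
           (\<exists>P. nash_eq N a (real_of_int h) P) \<and>
           price_of_stability N a (real_of_int h) \<ge> (real_of_int h - 1) / 2"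
proof -
  have e: "real_of_int h = real (nat h)" using assms by simp
  have "nat h \<ge> 2" using assms by simp
  from main_nat[OF this] obtain N a where
    "atomic_instance N a (real (nat h))" "\<exists>P. nash_eq N a (real (nat h)) P"
    "price_of_stability N a (real (nat h)) \<ge> (real (nat h) - 1) / 2" by blast
  then show ?thesis unfolding e by blast
qed

end
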